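(* Let $A\subset\mathcal L$ with $|A|=M$, $1\le M<N$, and let $U$ be an $N\times N$ unitary matrix with entries $U_{y,z}=\frac{1}{\sqrt N}\alpha(y,z)$. Let $\xi(z)=\frac{1}{\sqrt N}(-1)^{\mathbf 1_A(z)}$ and let $\psi_k$ be the amplified state described in the context. Fix $y$ with $\sum_{z=0}^{N-1}\alpha(y,z)=0$ and $\sum_{z\in A}\alpha(y,z)\neq0$. Then $$\frac{(U\psi_k)(y)}{(U\xi)(y)}=-\frac{N}{2M}\tan\theta\,\sin(2k\theta),\qquad\text{so}\qquad \frac{|(U\psi_k)(y)|^2}{|(U\xi)(y)|^2}=\frac{N^2}{4M^2}\tan^2\theta\sin^2(2k\theta),$$ and if moreover $M\le N/2$ this ratio lies between $\frac{N}{4M}\frac{N}{N-M}(1-\frac{2M}{N})^2$ and $\frac{N}{4M}\frac{N}{N-M}$.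
   Context: $\mathcal L=\{0,1,\dots,N-1\}$, $N\ge2$. $\theta\in(0,\pi/2)$ with $\sin\theta=\sqrt{M/N}$, $k=\lfloor\pi/(4\theta)\rfloor$, $a_k=\frac{\sin((2k+1)\theta)}{\sqrt M}$, $b_k=\frac{\cos((2k+1)\theta)}{\sqrt{N-M}}$, and $\psi_k(z)=a_k$ for $z\in A$, $\psi_k(z)=b_k$ for $z\notin A$. $\mathbf 1_A$ is the indicator function of $A$. *)

theory Defs
  imports Complex_Main
begin

text \<open>Vectors and matrices over the index set L = {0,..,N-1} are represented as
  functions on nat (vectors) and nat => nat (matrices), restricted to indices < N.\<close>

definition unitary_fun :: "nat \<Rightarrow> (nat \<Rightarrow> nat \<Rightarrow> complex) \<Rightarrow> bool" where
  "unitary_fun N U \<longleftrightarrow>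
     (\<forall>y<N. \<forall>y'<N. (\<Sum>z<N. U y z * cnj (U y' z)) = (if y = y' then 1 else 0)) \<and>
     (\<forall>z<N. \<forall>z'<N. (\<Sum>y<N. cnj (U y z) * U y z') = (if z = z' then 1 else 0))"

definition mat_vec :: "nat \<Rightarrow> (nat \<Rightarrow> nat \<Rightarrow> complex) \<Rightarrow> (nat \<Rightarrow> complex) \<Rightarrow> nat \<Rightarrow> complex" where
  "mat_vec N U v y = (\<Sum>z<N. U y z * v z)"

definition grover_theta :: "nat \<Rightarrow> nat \<Rightarrow> real" where
  "grover_theta N M = arcsin (sqrt (real M / real N))"

definition grover_k :: "nat \<Rightarrow> nat \<Rightarrow> nat" where
  "grover_k N M = nat \<lfloor>pi / (4 * grover_theta N M)\<rfloor>"

definition grover_a :: "nat \<Rightarrow> nat \<Rightarrow> real" where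
  "grover_a N M = sin ((2 * real (grover_k N M) + 1) * grover_theta N M) / sqrt (real M)"

definition grover_b :: "nat \<Rightarrow> nat \<Rightarrow> real" where
  "grover_b N M = cos ((2 * real (grover_k N M) + 1) * grover_theta N M) / sqrt (real N - real M)"

definition grover_psi :: "nat \<Rightarrow> nat set \<Rightarrow> nat \<Rightarrow> complex" where
  "grover_psi N A z = complex_of_real
     (if z \<in> A then grover_a N (card A) else grover_b N (card A))"

definition grover_xi :: "nat \<Rightarrow> nat set \<Rightarrow> nat \<Rightarrow> complex" where
  "grover_xi N A z = complex_of_real ((-1) ^ (if z \<in> A then 1 else 0) / sqrt (real N))"

end

theory Submission
  imports Defs
begin

theorem mainTheorem8:
  fixes N M :: nat and A :: "nat set" and \<alpha> :: "nat \<Rightarrow> nat \<Rightarrow> complex" and y :: nat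
  assumes "N \<ge> 2"
    and "A \<subseteq> {..<N}" and "card A = M" and "1 \<le> M" and "M < N"
    and "unitary_fun N (\<lambda>y z. \<alpha> y z / complex_of_real (sqrt (real N)))"
    and "y < N"
    and "(\<Sum>z<N. \<alpha> y z) = 0"
    and "(\<Sum>z\<in>A. \<alpha> y z) \<noteq> 0"
  defines "U \<equiv> (\<lambda>y z. \<alpha> y z / complex_of_real (sqrt (real N)))"
    and "\<theta> \<equiv> grover_theta N M"
    and "k \<equiv> grover_k N M"
  shows "mat_vec N U (grover_psi N A) y / mat_vec N U (grover_xi N A) y
           = complex_of_real (- (real N / (2 * real M)) * tan \<theta> * sin (2 * real k * \<theta>))
         \<and> (cmod (mat_vec N U (grover_psi N A) y))\<^sup>2 / (cmod (mat_vec N U (grover_xi N A) y))\<^sup>2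
           = (real N)\<^sup>2 / (4 * (real M)\<^sup>2) * (tan \<theta>)\<^sup>2 * (sin (2 * real k * \<theta>))\<^sup>2
         \<and> (2 * M \<le> N \<longrightarrow>
         real N / (4 * real M) * (real N / (real N - real M)) * (1 - 2 * real M / real N)\<^sup>2
           \<le> (cmod (mat_vec N U (grover_psi N A) y))\<^sup>2 / (cmod (mat_vec N U (grover_xi N A) y))\<^sup>2
         \<and> (cmod (mat_vec N U (grover_psi N A) y))\<^sup>2 / (cmod (mat_vec N U (grover_xi N A) y))\<^sup>2
           \<le> real N / (4 * real M) * (real N / (real N - real M)))"
proof -
  define S where "S = (\<Sum>z\<in>A. \<alpha> y z)"
  define a where "a = grover_a N M"
  define b where "b = grover_b N M"
  define n where "n = real N"
  define m where "m = real M"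
  have n0: "n > 0" and m0: "m > 0" and mn: "m < n"
    using assms(1,4,5) by (auto simp: n_def m_def)
  have fin: "finite A" using assms(2) finite_subset by blast
  have cardA: "card A = M" by fact
  have split: "\<And>f. (\<Sum>z<N. f z) = (\<Sum>z\<in>A. f z) + (\<Sum>z\<in>{..<N}-A. f z)"
    using assms(2) by (metis add.commute finite_lessThan sum.subset_diff)
  have compl: "(\<Sum>z\<in>{..<N}-A. \<alpha> y z) = - S"
    using split[of "\<alpha> y"] assms(8) unfolding S_def by (simp add: eq_neg_iff_add_eq_0 add.commute)
  have sN: "sqrt n > 0" using n0 by simp
  have P: "mat_vec N U (grover_psi N A) y = complex_of_real ((a - b) / sqrt n) * S"
  proof -
    have "mat_vec N U (grover_psi N A) y
        = (\<Sum>z\<in>A. \<alpha> y z * complex_of_real (a / sqrt n)) + (\<Sum>z\<in>{..<N}-A. \<alpha> y z * complex_of_real (b / sqrt n))"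
      unfolding mat_vec_def U_def grover_psi_def a_def b_def n_def
      by (subst split, intro arg_cong2[where f="(+)"] sum.cong, auto simp: cardA)
    also have "\<dots> = complex_of_real (a / sqrt n) * S + complex_of_real (b / sqrt n) * (- S)"
      by (simp only: sum_distrib_right[symmetric] compl S_def[symmetric]) (simp add: mult.commute)
    also have "\<dots> = complex_of_real ((a - b) / sqrt n) * S"
      by (simp add: algebra_simps diff_divide_distrib)
    finally show ?thesis .
  qed
  have hlp: "\<And>w x. w / complex_of_real (sqrt (real N)) * complex_of_real (x / sqrt (real N)) = w * complex_of_real (x / real N)"
  proof -
    fix w x
    have e: "sqrt (real N) * sqrt (real N) = real N" by simp
    have "w / complex_of_real (sqrt (real N)) * complex_of_real (x / sqrt (real N))
        = w * complex_of_real x / complex_of_real (sqrt (real N) * sqrt (real N))"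
      by (simp add: of_real_divide mult_divide_mult_cancel_left_if field_simps flip: of_real_mult)
    also have "\<dots> = w * complex_of_real x / complex_of_real (real N)"
      by (simp only: e)
    also have "\<dots> = w * complex_of_real (x / real N)" by (simp add: of_real_divide)
    finally show "w / complex_of_real (sqrt (real N)) * complex_of_real (x / sqrt (real N)) = w * complex_of_real (x / real N)" .
  qed
  have Q: "mat_vec N U (grover_xi N A) y = complex_of_real (-2 / n) * S"
  proof -
    have "mat_vec N U (grover_xi N A) y
        = (\<Sum>z\<in>A. \<alpha> y z * complex_of_real (-1 / n)) + (\<Sum>z\<in>{..<N}-A. \<alpha> y z * complex_of_real (1 / n))"
      unfolding mat_vec_def U_def grover_xi_def n_def
      apply (subst split, intro arg_cong2[where f="(+)"] sum.cong)
      using hlp[of _ "-1"] hlp[of _ 1] by auto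
    also have "\<dots> = complex_of_real (-1 / n) * S + complex_of_real (1 / n) * (- S)"
      by (simp only: sum_distrib_right[symmetric] compl S_def[symmetric]) (simp add: mult.commute)
    also have "\<dots> = complex_of_real (-2 / n) * S"
      by (simp add: algebra_simps)
    finally show ?thesis .
  qed
  define s where "s = sqrt (m / n)"
  have s0: "0 < s" "s < 1" using n0 m0 mn by (auto simp: s_def)
  have th: "\<theta> = arcsin s" unfolding \<theta>_def grover_theta_def s_def m_def n_def ..
  have sin_th: "sin \<theta> = s" using s0 th by simp
  have cos_th: "cos \<theta> = sqrt (1 - s\<^sup>2)" using s0 th cos_arcsin by simp
  have ss: "s\<^sup>2 = m / n" using n0 m0 by (simp add: s_def)
  have sqm: "sqrt m = s * sqrt n" using n0 by (simp add: s_def real_sqrt_divide)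
  define c where "c = cos \<theta>"
  have cc: "c\<^sup>2 = (n - m) / n" using cos_th ss n0 mn by (simp add: c_def field_simps)
  have c0: "c > 0" using cos_th s0 by (simp add: c_def abs_square_less_1)
  have sqnm: "sqrt (n - m) = c * sqrt n"
  proof -
    have "sqrt (n - m) = sqrt (c\<^sup>2 * n)" using cc n0 by simp
    also have "\<dots> = c * sqrt n" using c0 by (simp add: real_sqrt_mult)
    finally show ?thesis .
  qed
  define t where "t = (2 * real k + 1) * \<theta>"
  have a_eq: "a = sin t / (s * sqrt n)"
    unfolding a_def grover_a_def t_def k_def \<theta>_def using sqm by (simp add: m_def)
  have b_eq: "b = cos t / (c * sqrt n)"
    unfolding b_def grover_b_def t_def k_def \<theta>_def using sqnm by (simp add: m_def n_def)
  have t_eq: "sin (2 * real k * \<theta>) = sin t * c - cos t * s"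
  proof -
    have "2 * real k * \<theta> = t - \<theta>" by (simp add: t_def algebra_simps)
    then show ?thesis by (simp add: sin_diff c_def sin_th)
  qed
  define r where "r = - (real N / (2 * real M)) * tan \<theta> * sin (2 * real k * \<theta>)"
  have nm: "n / m = 1 / s\<^sup>2" using ss n0 m0 by simp
  have r_eq: "r = - sin (2 * real k * \<theta>) / (2 * s * c)"
  proof -
    have h1: "real N / (2 * real M) = 1 / (2 * s\<^sup>2)" using nm by (simp add: n_def m_def)
    have "r = - (1 / (2 * s\<^sup>2)) * (s / c) * sin (2 * real k * \<theta>)"
      unfolding r_def tan_def h1 sin_th c_def ..
    also have "\<dots> = - sin (2 * real k * \<theta>) / (2 * s * c)"
      using s0 c0 by (simp add: power2_eq_square)
    finally show ?thesis .
  qed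
  have key: "((a - b) / sqrt n) / (-2 / n) = r"
  proof -
    have as: "a * sqrt n = sin t / s" using sN by (simp add: a_eq)
    have bs: "b * sqrt n = cos t / c" using sN by (simp add: b_eq)
    have nn: "n / sqrt n = sqrt n" using n0 by (simp add: real_div_sqrt)
    have "((a - b) / sqrt n) / (-2 / n) = - ((a - b) * (n / sqrt n)) / 2"
      by (simp add: divide_simps)
    also have "\<dots> = - (a * sqrt n - b * sqrt n) / 2" by (simp add: nn algebra_simps)
    also have "\<dots> = - (sin t / s - cos t / c) / 2" by (simp only: as bs)
    also have "\<dots> = - (sin t * c - cos t * s) / (2 * s * c)"
      using s0 c0 by (simp add: field_simps)
    finally show ?thesis using r_eq t_eq by simp
  qed
  have S0: "S \<noteq> 0" using assms(9) S_def by simp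
  have part1: "mat_vec N U (grover_psi N A) y / mat_vec N U (grover_xi N A) y = complex_of_real r"
    unfolding P Q using S0 key n0 by (simp flip: key)
  have part2: "(cmod (mat_vec N U (grover_psi N A) y))\<^sup>2 / (cmod (mat_vec N U (grover_xi N A) y))\<^sup>2 = r\<^sup>2"
    by (metis part1 norm_divide norm_of_real power_divide power2_abs)
  have r2: "r\<^sup>2 = (real N)\<^sup>2 / (4 * (real M)\<^sup>2) * (tan \<theta>)\<^sup>2 * (sin (2 * real k * \<theta>))\<^sup>2"
    unfolding r_def by (simp add: power_mult_distrib power_divide)
  have part3: "2 * M \<le> N \<longrightarrow>
         real N / (4 * real M) * (real N / (real N - real M)) * (1 - 2 * real M / real N)\<^sup>2 \<le> r\<^sup>2
         \<and> r\<^sup>2 \<le> real N / (4 * real M) * (real N / (real N - real M))"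
  proof
    assume h: "2 * M \<le> N"
    define C where "C = n / (4 * m) * (n / (n - m))"
    have C0: "C \<ge> 0" using n0 m0 mn by (simp add: C_def)
    have rC: "r\<^sup>2 = C * (sin (2 * real k * \<theta>))\<^sup>2"
    proof -
      have sc: "(s * c)\<^sup>2 = (m / n) * ((n - m) / n)" using ss cc by (simp add: power_mult_distrib)
      have Ce: "C = 1 / (4 * ((m / n) * ((n - m) / n)))" using n0 m0 mn by (simp add: C_def)
      have "r\<^sup>2 = (sin (2 * real k * \<theta>))\<^sup>2 / (4 * (s * c)\<^sup>2)"
        unfolding r_eq by (simp add: power_divide power_mult_distrib)
      then show ?thesis unfolding sc Ce by simp
    qed
    have hh: "2 * m \<le> n" using h by (simp add: m_def n_def)
    have ss2: "s \<le> sqrt 2 / 2"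
    proof -
      have "m / n \<le> 1 / 2" using hh n0 by (simp add: divide_simps)
      then have "s\<^sup>2 \<le> (sqrt 2 / 2)\<^sup>2" using ss by (simp add: power_divide)
      then show ?thesis by (rule power2_le_imp_le) simp
    qed
    have thpos: "\<theta> > 0" using th s0 arcsin_less_mono[of 0 s] by simp
    have th4: "\<theta> \<le> pi / 4"
    proof -
      have "sqrt 2 \<le> sqrt (2\<^sup>2)" by (rule real_sqrt_le_mono) simp
      then have s22: "sqrt 2 \<le> 2" by simp
      have "arcsin s \<le> arcsin (sin (pi/4))" unfolding sin_45
        using s0 ss2 s22 by (intro arcsin_le_arcsin) (auto simp: real_sqrt_le_iff)
      also have "\<dots> = pi / 4" by (rule arcsin_sin) auto
      finally show ?thesis using th by simp
    qed
    have kdef: "k = nat \<lfloor>pi / (4 * \<theta>)\<rfloor>" unfolding k_def grover_k_def \<theta>_def ..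
    have q1: "pi / (4 * \<theta>) \<ge> 1" using th4 thpos by (simp add: field_simps)
    have fl: "0 \<le> \<lfloor>pi / (4 * \<theta>)\<rfloor>" using q1 by simp
    have rk: "real k = of_int \<lfloor>pi / (4 * \<theta>)\<rfloor>" unfolding kdef using fl by simp
    have kle: "real k \<le> pi / (4 * \<theta>)" unfolding rk by (rule of_int_floor_le)
    have klt: "pi / (4 * \<theta>) < real k + 1" unfolding rk by (rule real_of_int_floor_add_one_gt)
    have u1: "2 * real k * \<theta> \<le> pi / 2" using kle thpos by (simp add: field_simps)
    have u2: "pi / 2 - 2 * \<theta> \<le> 2 * real k * \<theta>" using klt thpos by (simp add: field_simps)
    have cos2: "cos (2 * \<theta>) = 1 - 2 * m / n" using cos_double_sin[of \<theta>] sin_th ss by simp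
    have cos2nn: "cos (2 * \<theta>) \<ge> 0" proof -
      have "2 * m / n \<le> 1" using hh n0 by (simp add: divide_simps)
      then show ?thesis using cos2 by linarith
    qed
    have "cos (2 * \<theta>) = sin (pi / 2 - 2 * \<theta>)" by (simp add: sin_cos_eq)
    also have "\<dots> \<le> sin (2 * real k * \<theta>)"
      using u1 u2 th4 by (intro sin_monotone_2pi_le) auto
    finally have lo: "cos (2 * \<theta>) \<le> sin (2 * real k * \<theta>)" .
    have lo2: "(1 - 2 * m / n)\<^sup>2 \<le> (sin (2 * real k * \<theta>))\<^sup>2"
      using power_mono[OF lo cos2nn, of 2] cos2 by simp
    have hi2: "(sin (2 * real k * \<theta>))\<^sup>2 \<le> 1" by (simp add: abs_square_le_1)
    show "real N / (4 * real M) * (real N / (real N - real M)) * (1 - 2 * real M / real N)\<^sup>2 \<le> r\<^sup>2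
         \<and> r\<^sup>2 \<le> real N / (4 * real M) * (real N / (real N - real M))"
      using mult_left_mono[OF lo2 C0] mult_left_mono[OF hi2 C0] rC
      by (simp add: C_def n_def m_def)
  qed
  show ?thesis using part1 part2 r2 part3 by (simp add: r_def)
qed

end
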